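(* Let $k,n\in\mathbb{N}$ with $k<n$, and let $A\in\mathbb{R}^{k\times k}$ and $B\in\mathbb{R}^{n\times n}$ be symmetric positive definite. Let $\iota_k:\mathbb{R}^k\hookrightarrow\mathbb{R}^n$ be any isometric embedding and set $B^{[\alpha]}:=\iota_k^*B^\alpha\iota_k$ for $\alpha\in\mathbb{R}$. Then for every $\alpha\in\mathbb{R}$ and all $j=1,\dots,k$, $$\lambda_j\big(B^{[\alpha/2]}AB^{[\alpha/2]}\big)\le\lambda_j\big((B^{[\alpha]})^{1/2}A(B^{[\alpha]})^{1/2}\big),$$ where $\lambda_1(\cdot)\le\lambda_2(\cdot)\le\dots$ denote eigenvalues in increasing order (with multiplicity). *)

theory Defs
  imports "Jordan_Normal_Form.Matrix" "Jordan_Normal_Form.Char_Poly" "HOL-Library.Multiset"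
begin

definition spd :: "nat \<Rightarrow> real mat \<Rightarrow> bool" where
  "spd n A \<longleftrightarrow> A \<in> carrier_mat n n \<and> transpose_mat A = A \<and>
     (\<forall>v \<in> carrier_vec n. v \<noteq> 0\<^sub>v n \<longrightarrow> v \<bullet> (A *\<^sub>v v) > 0)"

definition mat_rpow :: "real mat \<Rightarrow> real \<Rightarrow> real mat" where
  "mat_rpow B a = (THE M. M \<in> carrier_mat (dim_row B) (dim_row B) \<and>
     (\<forall>v mu. eigenvector B v mu \<longrightarrow> M *\<^sub>v v = (mu powr a) \<cdot>\<^sub>v v))"

definition isometric_embedding :: "nat \<Rightarrow> nat \<Rightarrow> real mat \<Rightarrow> bool" where
  "isometric_embedding k n \<iota> \<longleftrightarrow> \<iota> \<in> carrier_mat n k \<and> transpose_mat \<iota> * \<iota> = 1\<^sub>m k"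

definition compressed_pow :: "real mat \<Rightarrow> real mat \<Rightarrow> real \<Rightarrow> real mat" where
  "compressed_pow \<iota> B a = transpose_mat \<iota> * mat_rpow B a * \<iota>"

definition eig_asc :: "real mat \<Rightarrow> nat \<Rightarrow> real" where
  "eig_asc M j = sorted_list_of_multiset (proots (char_poly M)) ! (j - 1)"

end

theory Submission
  imports Defs "Jordan_Normal_Form.Schur_Decomposition"
begin

lemma mult_unit_vec_col: fixes A :: "real mat" assumes "A \<in> carrier_mat n m" "i < m"
  shows "A *\<^sub>v unit_vec m i = col A i"
proof (rule eq_vecI)
  fix j assume j: "j < dim_vec (col A i)"
  have "(\<Sum>ib = 0..<m. A $$ (j, ib) * (if ib = i then 1 else 0)) = (\<Sum>ib\<in>{0..<m}. if ib = i then A $$ (j, ib) else 0)"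
    by (rule sum.cong) auto
  also have "\<dots> = A $$ (j, i)" using assms by simp
  finally show "(A *\<^sub>v unit_vec m i) $ j = col A i $ j" using assms j
    by (auto simp: scalar_prod_def unit_vec_def row_def col_def)
qed (insert assms, auto)

lemma self_scalar_nonneg: fixes v :: "real vec" shows "v \<bullet> v \<ge> 0"
  unfolding scalar_prod_def by (intro sum_nonneg) auto

lemma self_scalar_zero: fixes v :: "real vec" assumes "v \<in> carrier_vec n"
  shows "v \<bullet> v = 0 \<longleftrightarrow> v = 0\<^sub>v n"
proof
  assume "v \<bullet> v = 0"
  hence "\<forall>i\<in>{0..<n}. v $ i * v $ i = 0" using assms
    unfolding scalar_prod_def by (subst (asm) sum_nonneg_eq_0_iff) auto
  thus "v = 0\<^sub>v n" using assms by (intro eq_vecI) auto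
qed (insert assms, auto)

lemma scalar_mat_transpose: fixes A :: "real mat"
  assumes "A \<in> carrier_mat n m" "x \<in> carrier_vec m" "y \<in> carrier_vec n"
  shows "(A *\<^sub>v x) \<bullet> y = x \<bullet> (transpose_mat A *\<^sub>v y)"
proof -
  have "(transpose_mat A *\<^sub>v y) \<bullet> x = y \<bullet> (A *\<^sub>v x)" by (rule transpose_vec_mult_scalar[OF assms(1,2,3)])
  thus ?thesis using assms by (metis comm_scalar_prod mult_mat_vec_carrier transpose_carrier_mat)
qed

lemma orth_ext: fixes u :: "real vec"
  assumes u: "u \<in> carrier_vec n" and uu: "u \<bullet> u = 1"
  shows "\<exists>U \<in> carrier_mat n n. transpose_mat U * U = 1\<^sub>m n \<and> col U 0 = u"
proof -
  have u0: "u \<noteq> 0\<^sub>v n" using uu u by auto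
  interpret cof_vec_space n "TYPE(real)" .
  define b where "b = basis_completion u"
  define ws where "ws = gram_schmidt n b"
  from basis_completion[OF u u0, folded b_def]
  have dist_b: "distinct b" and indep: "\<not> lin_dep (set b)" and b: "set b \<subseteq> carrier_vec n"
    and hdb: "hd b = u" and len_b: "length b = n" by auto
  have n: "n \<noteq> 0" using u0 u by (auto intro!: eq_vecI)
  from hdb len_b n obtain vs where bv: "b = u # vs" by (cases b, auto)
  from gram_schmidt_result[OF b dist_b indep refl, folded ws_def]
  have ws: "set ws \<subseteq> carrier_vec n" "corthogonal ws" "length ws = n"
    by (auto simp: len_b)
  from gram_schmidt_hd[OF u, of vs, folded bv] have hdws: "hd ws = u" unfolding ws_def .
  define us where "us = map (\<lambda>w. (1 / sqrt (w \<bullet> w)) \<cdot>\<^sub>v w) ws"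
  have lus: "length us = n" using ws by (simp add: us_def)
  have usc: "set us \<subseteq> carrier_vec n" using ws by (auto simp: us_def)
  have wpos: "ws ! i \<bullet> ws ! i > 0" if "i < n" for i
  proof -
    have "ws ! i \<bullet> ws ! i \<noteq> 0" using corthogonalD[OF ws(2), of i i] that ws(3) by auto
    with self_scalar_nonneg[of "ws ! i"] show ?thesis by linarith
  qed
  have usij: "us ! i \<bullet> us ! j = (if i = j then 1 else 0)" if "i < n" "j < n" for i j
  proof -
    have wi: "ws ! i \<in> carrier_vec n" "ws ! j \<in> carrier_vec n" using ws that by auto
    have "us ! i \<bullet> us ! j = (1 / sqrt (ws ! i \<bullet> ws ! i)) * (1 / sqrt (ws ! j \<bullet> ws ! j)) * (ws ! i \<bullet> ws ! j)"
      using that ws wi by (simp add: us_def)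
    also have "\<dots> = (if i = j then 1 else 0)"
    proof (cases "i = j")
      case True
      have p: "ws ! i \<bullet> ws ! i > 0" using wpos that by auto
      then show ?thesis using True
        by (simp add: field_simps)
    next
      case False
      then show ?thesis using corthogonalD[OF ws(2), of i j] that ws(3) by auto
    qed
    finally show ?thesis .
  qed
  define U where "U = mat_of_cols n us"
  have U: "U \<in> carrier_mat n n" unfolding U_def using lus by auto
  have colU: "col U i = us ! i" if "i < n" for i
    unfolding U_def using that lus usc by (metis cols_mat_of_cols cols_nth mat_of_cols_carrier(3) nth_mem subset_code(1))
  have "transpose_mat U * U = 1\<^sub>m n"
    by (rule eq_matI, insert U, auto simp: colU usij)
  moreover have "col U 0 = u"
  proof -
    have "ws ! 0 = u" using hdws ws n by (cases ws, auto)
    hence "us ! 0 = u" using uu n ws by (simp add: us_def hd_conv_nth)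
    thus ?thesis using colU n by auto
  qed
  ultimately show ?thesis using U by blast
qed


lemma sym_real_eig: fixes M :: "real mat"
  assumes M: "M \<in> carrier_mat n n" and sym: "transpose_mat M = M" and n: "n > 0"
  shows "\<exists>l. eigenvalue M l"
proof -
  define Mc where "Mc = map_mat complex_of_real M"
  have Mc: "Mc \<in> carrier_mat n n" using M by (simp add: Mc_def)
  from char_poly_factorized[OF Mc] obtain as where
    cp: "char_poly Mc = (\<Prod>a\<leftarrow>as. [:- a, 1:])" and las: "length as = n" by auto
  define z where "z = as ! 0"
  have zin: "z \<in> set as" using las n by (simp add: z_def)
  have "poly (char_poly Mc) z = 0" unfolding cp poly_prod_list
    by (subst prod_list_zero_iff) (use zin in auto)
  hence "eigenvalue Mc z" using eigenvalue_root_char_poly[OF Mc] by auto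
  then obtain v where ev: "eigenvector Mc v z" unfolding eigenvalue_def by auto
  hence v: "v \<in> carrier_vec n" and v0: "v \<noteq> 0\<^sub>v n" and Mv: "Mc *\<^sub>v v = z \<cdot>\<^sub>v v"
    unfolding eigenvector_def using Mc by auto
  define x where "x = vec n (\<lambda>i. Re (v $ i))"
  define y where "y = vec n (\<lambda>i. Im (v $ i))"
  define a where "a = Re z"
  define b where "b = Im z"
  have x: "x \<in> carrier_vec n" and y: "y \<in> carrier_vec n" by (auto simp: x_def y_def)
  have comp: "(\<Sum>j = 0..<n. complex_of_real (M $$ (i, j)) * v $ j) = z * v $ i" if i: "i < n" for i
  proof -
    have "(Mc *\<^sub>v v) $ i = z * v $ i" using Mv i v by simp
    thus ?thesis using i M v by (simp add: Mc_def mult_mat_vec_def scalar_prod_def row_def)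
  qed
  have Mx: "M *\<^sub>v x = a \<cdot>\<^sub>v x + (-b) \<cdot>\<^sub>v y"
  proof (rule eq_vecI)
    fix i assume "i < dim_vec (a \<cdot>\<^sub>v x + (-b) \<cdot>\<^sub>v y)"
    hence i: "i < n" using x y by auto
    have "Re (\<Sum>j = 0..<n. complex_of_real (M $$ (i, j)) * v $ j) = Re (z * v $ i)" using comp[OF i] by simp
    hence "(\<Sum>j = 0..<n. M $$ (i, j) * Re (v $ j)) = a * Re (v $ i) - b * Im (v $ i)"
      by (simp add: Re_sum a_def b_def)
    thus "(M *\<^sub>v x) $ i = (a \<cdot>\<^sub>v x + (-b) \<cdot>\<^sub>v y) $ i" using i M
      by (simp add: x_def y_def mult_mat_vec_def scalar_prod_def row_def)
  qed (insert M x y, auto)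
  have My: "M *\<^sub>v y = a \<cdot>\<^sub>v y + b \<cdot>\<^sub>v x"
  proof (rule eq_vecI)
    fix i assume "i < dim_vec (a \<cdot>\<^sub>v y + b \<cdot>\<^sub>v x)"
    hence i: "i < n" using x y by auto
    have "Im (\<Sum>j = 0..<n. complex_of_real (M $$ (i, j)) * v $ j) = Im (z * v $ i)" using comp[OF i] by simp
    hence "(\<Sum>j = 0..<n. M $$ (i, j) * Im (v $ j)) = a * Im (v $ i) + b * Re (v $ i)"
      by (simp add: Im_sum a_def b_def)
    thus "(M *\<^sub>v y) $ i = (a \<cdot>\<^sub>v y + b \<cdot>\<^sub>v x) $ i" using i M
      by (simp add: x_def y_def mult_mat_vec_def scalar_prod_def row_def)
  qed (insert M x y, auto)
  have "(M *\<^sub>v x) \<bullet> y = x \<bullet> (M *\<^sub>v y)"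
    using scalar_mat_transpose[OF M x y] sym by simp
  hence "a * (x \<bullet> y) + (-b) * (y \<bullet> y) = a * (x \<bullet> y) + b * (x \<bullet> x)"
    unfolding Mx My using x y
    by (simp add: add_scalar_prod_distrib[of _ n] scalar_prod_add_distrib[of _ n] comm_scalar_prod[of x n y])
  hence bz: "b * (x \<bullet> x + y \<bullet> y) = 0" by (simp add: algebra_simps)
  have xy0: "x \<noteq> 0\<^sub>v n \<or> y \<noteq> 0\<^sub>v n"
  proof (rule ccontr)
    assume "\<not> ?thesis"
    hence "x = 0\<^sub>v n" "y = 0\<^sub>v n" by auto
    hence xy: "x $ i = 0" "y $ i = 0" if "i < n" for i using that by auto
    have "v = 0\<^sub>v n"
    proof (rule eq_vecI)
      fix i assume "i < dim_vec (0\<^sub>v n :: complex vec)"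
      hence i: "i < n" by simp
      from xy[OF i] i show "v $ i = 0\<^sub>v n $ i" by (simp add: x_def y_def complex_eq_iff)
    qed (insert v, auto)
    with v0 show False by simp
  qed
  have "x \<bullet> x + y \<bullet> y > 0"
    using xy0 self_scalar_zero[OF x] self_scalar_zero[OF y] self_scalar_nonneg[of x] self_scalar_nonneg[of y]
    by linarith
  with bz have b0: "b = 0" by simp
  have z1: "a \<cdot>\<^sub>v x + 0 \<cdot>\<^sub>v y = a \<cdot>\<^sub>v x" "a \<cdot>\<^sub>v y + 0 \<cdot>\<^sub>v x = a \<cdot>\<^sub>v y"
    by (rule eq_vecI; use x y in auto)+
  from xy0 show ?thesis
  proof
    assume "x \<noteq> 0\<^sub>v n"
    hence "eigenvector M x a" unfolding eigenvector_def using M x Mx b0 z1 by auto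
    thus ?thesis unfolding eigenvalue_def by auto
  next
    assume "y \<noteq> 0\<^sub>v n"
    hence "eigenvector M y a" unfolding eigenvector_def using M y My b0 z1 by auto
    thus ?thesis unfolding eigenvalue_def by auto
  qed
qed


definition diagm :: "real list \<Rightarrow> real mat" where
  "diagm ls = mat (length ls) (length ls) (\<lambda>(i,j). if i = j then ls ! i else 0)"

lemma diagm_carrier[simp]: "diagm ls \<in> carrier_mat (length ls) (length ls)"
  by (simp add: diagm_def)

lemma diagm_dims[simp]: "dim_row (diagm ls) = length ls" "dim_col (diagm ls) = length ls"
  by (auto simp: diagm_def)

lemma diagm_index[simp]: "i < length ls \<Longrightarrow> j < length ls \<Longrightarrow> diagm ls $$ (i,j) = (if i = j then ls ! i else 0)"
  by (simp add: diagm_def)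

lemma orth_right: fixes U :: "real mat"
  assumes U: "U \<in> carrier_mat n n" and UU: "transpose_mat U * U = 1\<^sub>m n"
  shows "U * transpose_mat U = 1\<^sub>m n"
  using mat_mult_left_right_inverse[OF _ U UU] U by auto

lemma char_poly_spec: fixes N :: "real mat"
  assumes N: "N \<in> carrier_mat n n" and U: "U \<in> carrier_mat n n" and UU: "transpose_mat U * U = 1\<^sub>m n"
    and D: "transpose_mat U * N * U = diagm ls" and l: "length ls = n"
  shows "char_poly N = (\<Prod>a\<leftarrow>ls. [:- a, 1:])"
proof -
  have UU': "U * transpose_mat U = 1\<^sub>m n" by (rule orth_right[OF U UU])
  have Ut: "transpose_mat U \<in> carrier_mat n n" using U by simp
  have "U * diagm ls * transpose_mat U = U * (transpose_mat U * N * U) * transpose_mat U" by (simp add: D)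
  also have "\<dots> = (U * transpose_mat U) * N * (U * transpose_mat U)"
    using U Ut N by (simp add: assoc_mult_mat[of _ n n _ n _ n])
  also have "\<dots> = N" using UU' N by simp
  finally have "similar_mat N (diagm ls)"
    by (intro similar_matI[of _ _ U "transpose_mat U" n]) (use U Ut N l UU UU' in auto)
  hence "char_poly N = char_poly (diagm ls)" by (rule char_poly_similar)
  also have "\<dots> = (\<Prod>a\<leftarrow>diag_mat (diagm ls). [:- a, 1:])"
    by (rule char_poly_upper_triangular[of _ "length ls"]) (auto simp: upper_triangular_def)
  also have "diag_mat (diagm ls) = ls" by (intro nth_equalityI) (auto simp: diag_mat_def)
  finally show ?thesis .
qed

lemma spectral: fixes M :: "real mat"
  assumes "M \<in> carrier_mat n n" "transpose_mat M = M"
  shows "\<exists>U ls. U \<in> carrier_mat n n \<and> transpose_mat U * U = 1\<^sub>m n \<and> length ls = n \<and> sorted ls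
     \<and> transpose_mat U * M * U = diagm ls"
  using assms
proof (induct n arbitrary: M)
  case 0
  show ?case
    by (rule exI[of _ "1\<^sub>m 0"], rule exI[of _ "[]"]) (use 0 in \<open>auto intro!: eq_matI\<close>)
next
  case (Suc m M)
  let ?n = "Suc m"
  have M: "M \<in> carrier_mat ?n ?n" and symM: "transpose_mat M = M" using Suc by auto
  define R where "R = {x. poly (char_poly M) x = 0}"
  have cp0: "char_poly M \<noteq> 0" using degree_monic_char_poly[OF M] by auto
  have finR: "finite R" unfolding R_def using poly_roots_finite[OF cp0] .
  obtain l1 where "eigenvalue M l1" using sym_real_eig[OF M symM] by auto
  hence "l1 \<in> R" unfolding R_def using eigenvalue_root_char_poly[OF M] by auto
  hence Rne: "R \<noteq> {}" by auto
  define l0 where "l0 = Min R"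
  have l0R: "l0 \<in> R" unfolding l0_def using Min_in[OF finR Rne] .
  have l0min: "\<And>x. x \<in> R \<Longrightarrow> l0 \<le> x" unfolding l0_def using Min_le[OF finR] by auto
  have "eigenvalue M l0" using l0R unfolding R_def using eigenvalue_root_char_poly[OF M] by auto
  then obtain u0 where "eigenvector M u0 l0" unfolding eigenvalue_def by auto
  hence u0: "u0 \<in> carrier_vec ?n" and u00: "u0 \<noteq> 0\<^sub>v ?n" and Mu0: "M *\<^sub>v u0 = l0 \<cdot>\<^sub>v u0"
    unfolding eigenvector_def using M by auto
  have pos: "u0 \<bullet> u0 > 0" using self_scalar_nonneg[of u0] self_scalar_zero[OF u0] u00 by linarith
  define u where "u = (1 / sqrt (u0 \<bullet> u0)) \<cdot>\<^sub>v u0"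
  have u: "u \<in> carrier_vec ?n" using u0 by (simp add: u_def)
  have uu: "u \<bullet> u = 1" using u0 pos by (simp add: u_def field_simps)
  have Mu: "M *\<^sub>v u = l0 \<cdot>\<^sub>v u" unfolding u_def using mult_mat_vec[OF M u0] Mu0 u0
    by (simp add: smult_smult_assoc mult.commute)
  from orth_ext[OF u uu] obtain U0 where U0: "U0 \<in> carrier_mat ?n ?n"
    and U0U0: "transpose_mat U0 * U0 = 1\<^sub>m ?n" and cU0: "col U0 0 = u" by auto
  have U0t: "transpose_mat U0 \<in> carrier_mat ?n ?n" using U0 by simp
  have U0U0': "U0 * transpose_mat U0 = 1\<^sub>m ?n" by (rule orth_right[OF U0 U0U0])
  define T where "T = transpose_mat U0 * M * U0"
  have T: "T \<in> carrier_mat ?n ?n" unfolding T_def using U0 M by auto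
  have symT: "transpose_mat T = T"
  proof -
    have "transpose_mat T = transpose_mat U0 * transpose_mat (transpose_mat U0 * M)"
      unfolding T_def by (rule transpose_mult[of _ ?n ?n]) (use U0 M in auto)
    also have "transpose_mat (transpose_mat U0 * M) = transpose_mat M * U0"
      using transpose_mult[of "transpose_mat U0" ?n ?n M ?n] U0 M by simp
    finally show ?thesis unfolding T_def symM using U0 M by (simp add: assoc_mult_mat[of _ ?n ?n _ ?n _ ?n])
  qed
  have e0: "unit_vec ?n 0 \<in> carrier_vec ?n" by simp
  have colT: "T *\<^sub>v unit_vec ?n 0 = l0 \<cdot>\<^sub>v unit_vec ?n 0"
  proof -
    have "T *\<^sub>v unit_vec ?n 0 = transpose_mat U0 *\<^sub>v (M *\<^sub>v (U0 *\<^sub>v unit_vec ?n 0))"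
      unfolding T_def using U0 M e0 by (simp add: assoc_mult_mat_vec[of _ ?n ?n _ ?n])
    also have "U0 *\<^sub>v unit_vec ?n 0 = u" using mult_unit_vec_col[OF U0] cU0 by simp
    also have "transpose_mat U0 *\<^sub>v (M *\<^sub>v u) = l0 \<cdot>\<^sub>v (transpose_mat U0 *\<^sub>v u)"
      unfolding Mu using mult_mat_vec[OF U0t u] .
    also have "transpose_mat U0 *\<^sub>v u = transpose_mat U0 *\<^sub>v (U0 *\<^sub>v unit_vec ?n 0)"
      using mult_unit_vec_col[OF U0] cU0 by simp
    also have "\<dots> = (transpose_mat U0 * U0) *\<^sub>v unit_vec ?n 0" using U0 by simp
    also have "\<dots> = unit_vec ?n 0" unfolding U0U0 by simp
    finally show ?thesis .
  qed
  have Ti0: "T $$ (i, 0) = (if i = 0 then l0 else 0)" if "i < ?n" for i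
  proof -
    have "T $$ (i, 0) = col T 0 $ i" using T that by simp
    also have "col T 0 = l0 \<cdot>\<^sub>v unit_vec ?n 0" using colT mult_unit_vec_col[OF T, of 0] by simp
    finally show ?thesis using that by simp
  qed
  have T0j: "T $$ (0, j) = (if j = 0 then l0 else 0)" if "j < ?n" for j
  proof -
    have "T $$ (0, j) = transpose_mat T $$ (j, 0)" using T that by simp
    thus ?thesis using symT Ti0[OF that] by simp
  qed
  define T4 where "T4 = mat m m (\<lambda>(i,j). T $$ (Suc i, Suc j))"
  define T1 where "T1 = mat 1 1 (\<lambda>_. l0)"
  have T4: "T4 \<in> carrier_mat m m" by (simp add: T4_def)
  have T1: "T1 \<in> carrier_mat 1 1" by (simp add: T1_def)
  have symT4: "transpose_mat T4 = T4"
  proof (rule eq_matI)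
    fix i j assume "i < dim_row T4" "j < dim_col T4"
    hence ij: "i < m" "j < m" by (auto simp: T4_def)
    have "T $$ (Suc j, Suc i) = transpose_mat T $$ (Suc i, Suc j)" using T ij by simp
    thus "transpose_mat T4 $$ (i, j) = T4 $$ (i, j)" using ij symT by (simp add: T4_def)
  qed (auto simp: T4_def)
  have Tblock: "T = four_block_mat T1 (0\<^sub>m 1 m) (0\<^sub>m m 1) T4"
  proof (rule eq_matI)
    fix i j assume "i < dim_row (four_block_mat T1 (0\<^sub>m 1 m) (0\<^sub>m m 1) T4)"
      "j < dim_col (four_block_mat T1 (0\<^sub>m 1 m) (0\<^sub>m m 1) T4)"
    hence ij: "i < ?n" "j < ?n" using T1 T4 by auto
    show "T $$ (i, j) = four_block_mat T1 (0\<^sub>m 1 m) (0\<^sub>m m 1) T4 $$ (i, j)"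
    proof (cases "i = 0")
      case True
      then show ?thesis using ij T1 T4 T0j[of j] by (simp add: T1_def)
    next
      case False
      then show ?thesis using ij T1 T4 Ti0[of i] by (cases j) (auto simp: T4_def)
    qed
  qed (use T T1 T4 in auto)
  from Suc(1)[OF T4 symT4] obtain V ls' where V: "V \<in> carrier_mat m m"
    and VV: "transpose_mat V * V = 1\<^sub>m m" and lls: "length ls' = m" and sls: "sorted ls'"
    and VD: "transpose_mat V * T4 * V = diagm ls'" by auto
  have Vt: "transpose_mat V \<in> carrier_mat m m" using V by simp
  define W where "W = four_block_mat (1\<^sub>m 1) (0\<^sub>m 1 m) (0\<^sub>m m 1) V"
  have W: "W \<in> carrier_mat ?n ?n" unfolding W_def using V by auto
  have Wt: "transpose_mat W = four_block_mat (1\<^sub>m 1) (0\<^sub>m 1 m) (0\<^sub>m m 1) (transpose_mat V)"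
    unfolding W_def using V transpose_four_block_mat[of "1\<^sub>m 1" 1 1 "0\<^sub>m 1 m" m "0\<^sub>m m 1" m V] by simp
  have c1: "1\<^sub>m 1 \<in> carrier_mat 1 1" and z1: "0\<^sub>m 1 m \<in> carrier_mat 1 m" and z2: "0\<^sub>m m 1 \<in> carrier_mat m 1"
    by auto
  have VT4: "transpose_mat V * T4 \<in> carrier_mat m m" using Vt T4 by auto
  have WW: "transpose_mat W * W = 1\<^sub>m ?n"
  proof -
    have "transpose_mat W * W = four_block_mat (1\<^sub>m 1) (0\<^sub>m 1 m) (0\<^sub>m m 1) (transpose_mat V * V)"
      unfolding Wt by (subst W_def, subst mult_four_block_mat[OF c1 z1 z2 Vt c1 z1 z2 V], use V Vt in simp)
    also have "\<dots> = 1\<^sub>m ?n" unfolding VV by (rule eq_matI) auto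
    finally show ?thesis .
  qed
  have WTW: "transpose_mat W * T * W = diagm (l0 # ls')"
  proof -
    have "transpose_mat W * T * W = four_block_mat T1 (0\<^sub>m 1 m) (0\<^sub>m m 1) (transpose_mat V * T4 * V)"
      unfolding Wt Tblock by (subst W_def, subst mult_four_block_mat[OF c1 z1 z2 Vt T1 z1 z2 T4],
        subst mult_four_block_mat, use V Vt T1 T4 in \<open>auto simp: T1_def\<close>)
    also have "\<dots> = diagm (l0 # ls')" unfolding VD
      by (rule eq_matI) (use lls in \<open>auto simp: T1_def nth_Cons'\<close>)
    finally show ?thesis .
  qed
  define U where "U = U0 * W"
  have U: "U \<in> carrier_mat ?n ?n" unfolding U_def using U0 W by auto
  have Wt': "transpose_mat W \<in> carrier_mat ?n ?n" using W by simp
  have UU: "transpose_mat U * U = 1\<^sub>m ?n"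
  proof -
    have "transpose_mat U * U = transpose_mat W * (transpose_mat U0 * U0) * W"
      unfolding U_def using U0 W U0t Wt' by (simp add: transpose_mult[of _ ?n ?n] assoc_mult_mat[of _ ?n ?n _ ?n _ ?n])
    also have "\<dots> = 1\<^sub>m ?n" unfolding U0U0 using WW W Wt' by simp
    finally show ?thesis .
  qed
  have UMU: "transpose_mat U * M * U = diagm (l0 # ls')"
  proof -
    have "transpose_mat U * M * U = transpose_mat W * T * W"
      unfolding U_def T_def using U0 W U0t Wt' M by (simp add: transpose_mult[of _ ?n ?n] assoc_mult_mat[of _ ?n ?n _ ?n _ ?n])
    thus ?thesis using WTW by simp
  qed
  have "l0 \<le> x" if x: "x \<in> set ls'" for x
  proof -
    have cT4: "char_poly T4 = (\<Prod>a\<leftarrow>ls'. [:- a, 1:])" by (rule char_poly_spec[OF T4 V VV VD lls])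
    have "poly (char_poly T4) x = 0" unfolding cT4 poly_prod_list
      by (subst prod_list_zero_iff) (use x in auto)
    moreover have "char_poly T = char_poly T1 * char_poly T4"
      unfolding Tblock by (rule char_poly_four_block_zeros_col[OF T1 _ T4]) auto
    moreover have "char_poly M = char_poly T"
    proof (rule char_poly_similar, rule similar_matI[of _ _ U0 "transpose_mat U0" ?n])
      show "M = U0 * T * transpose_mat U0"
      proof -
        have "U0 * T * transpose_mat U0 = (U0 * transpose_mat U0) * M * (U0 * transpose_mat U0)"
          unfolding T_def using U0 U0t M by (simp add: assoc_mult_mat[of _ ?n ?n _ ?n _ ?n])
        thus ?thesis using U0U0' M by simp
      qed
    qed (use M T U0 U0t U0U0 U0U0' in auto)
    ultimately have "x \<in> R" unfolding R_def by simp
    thus ?thesis by (rule l0min)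
  qed
  hence "sorted (l0 # ls')" using sls by simp
  thus ?case using U UU UMU lls by (intro exI[of _ U] exI[of _ "l0 # ls'"]) auto
qed


definition spec :: "real mat \<Rightarrow> nat \<Rightarrow> real mat \<Rightarrow> real list \<Rightarrow> bool" where
  "spec M n U ls \<longleftrightarrow> M \<in> carrier_mat n n \<and> U \<in> carrier_mat n n \<and> transpose_mat U * U = 1\<^sub>m n
     \<and> length ls = n \<and> transpose_mat U * M * U = diagm ls"

lemma spec_exists: fixes M :: "real mat"
  assumes "M \<in> carrier_mat n n" "transpose_mat M = M"
  shows "\<exists>U ls. spec M n U ls \<and> sorted ls"
  using spectral[OF assms] assms unfolding spec_def by blast

lemma spec_repr: assumes "spec M n U ls"
  shows "M = U * diagm ls * transpose_mat U"
proof -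
  from assms have N: "M \<in> carrier_mat n n" and U: "U \<in> carrier_mat n n" and UU: "transpose_mat U * U = 1\<^sub>m n"
    and D: "transpose_mat U * M * U = diagm ls" and l: "length ls = n" unfolding spec_def by auto
  have UU': "U * transpose_mat U = 1\<^sub>m n" by (rule orth_right[OF U UU])
  have Ut: "transpose_mat U \<in> carrier_mat n n" using U by simp
  have "U * diagm ls * transpose_mat U = U * (transpose_mat U * M * U) * transpose_mat U" by (simp add: D)
  also have "\<dots> = (U * transpose_mat U) * M * (U * transpose_mat U)"
    using U Ut N by (simp add: assoc_mult_mat[of _ n n _ n _ n])
  also have "\<dots> = M" using UU' N by simp
  finally show ?thesis by simp
qed

lemma spec_of_repr: fixes U :: "real mat"
  assumes U: "U \<in> carrier_mat n n" and UU: "transpose_mat U * U = 1\<^sub>m n" and l: "length ls = n"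
  shows "spec (U * diagm ls * transpose_mat U) n U ls"
proof -
  have Ut: "transpose_mat U \<in> carrier_mat n n" using U by simp
  have D: "diagm ls \<in> carrier_mat n n" using l by auto
  have "transpose_mat U * (U * diagm ls * transpose_mat U) * U = (transpose_mat U * U) * diagm ls * (transpose_mat U * U)"
    using U Ut D by (simp add: assoc_mult_mat[of _ n n _ n _ n])
  also have "\<dots> = diagm ls" using UU D l by simp
  finally show ?thesis unfolding spec_def using U UU l D Ut by auto
qed

lemma spec_sym: assumes "spec M n U ls" shows "transpose_mat M = M"
proof -
  from assms have U: "U \<in> carrier_mat n n" and l: "length ls = n" unfolding spec_def by auto
  have Ut: "transpose_mat U \<in> carrier_mat n n" using U by simp
  have D: "diagm ls \<in> carrier_mat n n" using l by auto
  have Dt: "transpose_mat (diagm ls) = diagm ls" by (rule eq_matI) auto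
  have "transpose_mat (U * diagm ls * transpose_mat U) = U * transpose_mat (U * diagm ls)"
    using transpose_mult[of "U * diagm ls" n n "transpose_mat U" n] U D by simp
  also have "transpose_mat (U * diagm ls) = diagm ls * transpose_mat U"
    using transpose_mult[OF U D] Dt by simp
  finally show ?thesis using spec_repr[OF assms] U D Ut by (simp add: assoc_mult_mat[of _ n n _ n _ n])
qed

lemma spec_carrier: "spec M n U ls \<Longrightarrow> M \<in> carrier_mat n n" unfolding spec_def by auto

lemma diagm_mult_vec: assumes "c \<in> carrier_vec (length ls)"
  shows "diagm ls *\<^sub>v c = vec (length ls) (\<lambda>l. ls ! l * c $ l)"
proof (rule eq_vecI)
  fix i assume "i < dim_vec (vec (length ls) (\<lambda>l. ls ! l * c $ l))"
  hence i: "i < length ls" by simp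
  have "(diagm ls *\<^sub>v c) $ i = (\<Sum>j\<in>{0..<length ls}. (if i = j then ls ! i else 0) * c $ j)"
    using i assms by (simp add: mult_mat_vec_def scalar_prod_def row_def)
  also have "\<dots> = (\<Sum>j\<in>{0..<length ls}. if j = i then ls ! i * c $ j else 0)"
    by (rule sum.cong) auto
  also have "\<dots> = ls ! i * c $ i" using i by simp
  finally show "(diagm ls *\<^sub>v c) $ i = vec (length ls) (\<lambda>l. ls ! l * c $ l) $ i" using i by simp
qed (use assms in auto)

lemma diagm_mult: assumes "length xs = length ys"
  shows "diagm xs * diagm ys = diagm (map2 (*) xs ys)"
proof (rule eq_matI)
  fix i j assume ij: "i < dim_row (diagm (map2 (*) xs ys))" "j < dim_col (diagm (map2 (*) xs ys))"
  hence ij: "i < length xs" "j < length xs" using assms by auto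
  have "(diagm xs * diagm ys) $$ (i, j) = (\<Sum>l\<in>{0..<length xs}. (if i = l then xs ! i else 0) * (if l = j then ys ! l else 0))"
    using ij assms by (simp add: scalar_prod_def row_def col_def)
  also have "\<dots> = (\<Sum>l\<in>{0..<length xs}. if l = i then (if i = j then xs ! i * ys ! i else 0) else 0)"
    by (rule sum.cong) auto
  also have "\<dots> = (if i = j then xs ! i * ys ! i else 0)" using ij by simp
  finally show "(diagm xs * diagm ys) $$ (i, j) = diagm (map2 (*) xs ys) $$ (i, j)" using ij assms by simp
qed (use assms in auto)

lemma quad_spec: assumes sp: "spec M n U ls" and x: "x \<in> carrier_vec n"
  shows "x \<bullet> (M *\<^sub>v x) = (\<Sum>l\<in>{0..<n}. ls ! l * ((transpose_mat U *\<^sub>v x) $ l)^2)"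
    "x \<bullet> x = (\<Sum>l\<in>{0..<n}. ((transpose_mat U *\<^sub>v x) $ l)^2)"
proof -
  from sp have M: "M \<in> carrier_mat n n" and U: "U \<in> carrier_mat n n" and UU: "transpose_mat U * U = 1\<^sub>m n"
    and l: "length ls = n" unfolding spec_def by auto
  have Ut: "transpose_mat U \<in> carrier_mat n n" using U by simp
  have UU': "U * transpose_mat U = 1\<^sub>m n" by (rule orth_right[OF U UU])
  define c where "c = transpose_mat U *\<^sub>v x"
  have c: "c \<in> carrier_vec n" unfolding c_def using Ut x by auto
  have D: "diagm ls \<in> carrier_mat n n" using l by auto
  have "M *\<^sub>v x = U *\<^sub>v (diagm ls *\<^sub>v c)"
    unfolding c_def by (subst spec_repr[OF sp]) (use U D Ut x in \<open>simp add: assoc_mult_mat_vec[of _ n n _ n]\<close>)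
  hence "x \<bullet> (M *\<^sub>v x) = x \<bullet> (U *\<^sub>v (diagm ls *\<^sub>v c))" by simp
  also have "\<dots> = c \<bullet> (diagm ls *\<^sub>v c)"
  proof -
    have "c \<bullet> (diagm ls *\<^sub>v c) = x \<bullet> (transpose_mat (transpose_mat U) *\<^sub>v (diagm ls *\<^sub>v c))"
      unfolding c_def by (rule scalar_mat_transpose[OF Ut x]) (use D c l in \<open>auto simp: c_def\<close>)
    thus ?thesis by simp
  qed
  also have "\<dots> = (\<Sum>l\<in>{0..<n}. ls ! l * c $ l ^ 2)"
    using c l by (simp add: diagm_mult_vec scalar_prod_def power2_eq_square algebra_simps)
  finally show "x \<bullet> (M *\<^sub>v x) = (\<Sum>l\<in>{0..<n}. ls ! l * ((transpose_mat U *\<^sub>v x) $ l)^2)" unfolding c_def .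
  have "x = U *\<^sub>v c" unfolding c_def using U Ut x UU' by (simp flip: assoc_mult_mat_vec[of _ n n _ n])
  hence "x \<bullet> x = x \<bullet> (U *\<^sub>v c)" by simp
  also have "\<dots> = c \<bullet> c"
  proof -
    have "c \<bullet> c = x \<bullet> (transpose_mat (transpose_mat U) *\<^sub>v c)"
      unfolding c_def by (rule scalar_mat_transpose[OF Ut x]) (use c in \<open>auto simp: c_def\<close>)
    thus ?thesis by simp
  qed
  also have "\<dots> = (\<Sum>l\<in>{0..<n}. c $ l ^ 2)" using c by (simp add: scalar_prod_def power2_eq_square)
  finally show "x \<bullet> x = (\<Sum>l\<in>{0..<n}. ((transpose_mat U *\<^sub>v x) $ l)^2)" unfolding c_def .
qed

lemma proots_lin_prod: "proots (\<Prod>a\<leftarrow>ls. [:- (a::real), 1:]) = mset ls"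
proof (induct ls)
  case (Cons a ls)
  have "[:- a, 1:] \<noteq> 0" by simp
  moreover have "(\<Prod>a\<leftarrow>ls. [:- a, 1:]) \<noteq> 0" by (subst prod_list_zero_iff) auto
  ultimately have "proots ([:- a, 1:] * (\<Prod>a\<leftarrow>ls. [:- a, 1:])) = proots [:- a, 1:] + proots (\<Prod>a\<leftarrow>ls. [:- a, 1:])"
    by (rule proots_mult)
  thus ?case using Cons by simp
qed simp

lemma eig_asc_spec: assumes sp: "spec M n U ls" and s: "sorted ls"
  shows "eig_asc M j = ls ! (j - 1)"
proof -
  from sp have M: "M \<in> carrier_mat n n" and U: "U \<in> carrier_mat n n" and UU: "transpose_mat U * U = 1\<^sub>m n"
    and l: "length ls = n" and D: "transpose_mat U * M * U = diagm ls" unfolding spec_def by auto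
  have "char_poly M = (\<Prod>a\<leftarrow>ls. [:- a, 1:])" by (rule char_poly_spec[OF M U UU D l])
  thus ?thesis unfolding eig_asc_def by (simp add: proots_lin_prod s sorted_sort_id)
qed

lemma eig_asc_char_poly: "char_poly M = char_poly N \<Longrightarrow> eig_asc M j = eig_asc N j"
  unfolding eig_asc_def by simp


lemma scalar_vec_expand: fixes V :: "real mat"
  assumes V: "V \<in> carrier_mat n n" and u: "u \<in> carrier_vec n" and b: "b \<in> carrier_vec n"
  shows "u \<bullet> (V *\<^sub>v b) = (\<Sum>m\<in>{0..<n}. (u \<bullet> col V m) * b $ m)"
proof -
  have "(V *\<^sub>v b) \<bullet> u = b \<bullet> (transpose_mat V *\<^sub>v u)" by (rule scalar_mat_transpose[OF V b u])
  hence "u \<bullet> (V *\<^sub>v b) = b \<bullet> (transpose_mat V *\<^sub>v u)"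
    using comm_scalar_prod[of u n "V *\<^sub>v b"] V u b by simp
  also have "\<dots> = (\<Sum>m\<in>{0..<n}. b $ m * (col V m \<bullet> u))"
    using V b u by (simp add: scalar_prod_def[of b] mult_mat_vec_def)
  also have "\<dots> = (\<Sum>m\<in>{0..<n}. (u \<bullet> col V m) * b $ m)"
    by (rule sum.cong) (use V u in \<open>auto simp: comm_scalar_prod[of _ n]\<close>)
  finally show ?thesis .
qed

lemma weyl: fixes F G :: "real mat"
  assumes F: "F \<in> carrier_mat n n" "transpose_mat F = F"
    and G: "G \<in> carrier_mat n n" "transpose_mat G = G"
    and le: "\<And>x. x \<in> carrier_vec n \<Longrightarrow> x \<bullet> (F *\<^sub>v x) \<le> x \<bullet> (G *\<^sub>v x)"
    and j: "1 \<le> j" "j \<le> n"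
  shows "eig_asc F j \<le> eig_asc G j"
proof -
  obtain U ls where spF: "spec F n U ls" and sls: "sorted ls" using spec_exists[OF F] by auto
  obtain V ms where spG: "spec G n V ms" and sms: "sorted ms" using spec_exists[OF G] by auto
  from spF have U: "U \<in> carrier_mat n n" and lls: "length ls = n" unfolding spec_def by auto
  from spG have V: "V \<in> carrier_mat n n" and VV: "transpose_mat V * V = 1\<^sub>m n" and lms: "length ms = n"
    unfolding spec_def by auto
  define i where "i = j - 1"
  have i: "i < n" using j by (simp add: i_def)
  have e1: "eig_asc F j = ls ! i" unfolding i_def by (rule eig_asc_spec[OF spF sls])
  have e2: "eig_asc G j = ms ! i" unfolding i_def by (rule eig_asc_spec[OF spG sms])
  define E where "E = mat n n (\<lambda>(l,m). if l < i then (if m \<le> i then col U l \<bullet> col V m else 0)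
     else if l = i then 0 else (if m = l then 1 else 0))"
  have Ec: "E \<in> carrier_mat n n" by (simp add: E_def)
  have "E = mat\<^sub>r n n (\<lambda>l. if l = i then 0\<^sub>v n else row E l)"
    by (rule eq_matI) (auto simp: E_def)
  hence "det E = 0" using det_row_0[OF i, of "\<lambda>l. row E l"] Ec by auto
  then obtain b where b: "b \<in> carrier_vec n" and b0: "b \<noteq> 0\<^sub>v n" and Eb: "E *\<^sub>v b = 0\<^sub>v n"
    using det_0_iff_vec_prod_zero_field[OF Ec] by auto
  have Ebl: "(\<Sum>m\<in>{0..<n}. E $$ (l, m) * b $ m) = 0" if l: "l < n" for l
  proof -
    have "(E *\<^sub>v b) $ l = 0" using Eb l by simp
    thus ?thesis using l Ec b by (simp add: mult_mat_vec_def scalar_prod_def row_def)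
  qed
  have bz: "b $ m = 0" if "i < m" "m < n" for m
  proof -
    have "(\<Sum>m'\<in>{0..<n}. E $$ (m, m') * b $ m') = (\<Sum>m'\<in>{0..<n}. if m' = m then b $ m' else 0)"
      by (rule sum.cong) (use that in \<open>auto simp: E_def\<close>)
    thus ?thesis using Ebl[of m] that by simp
  qed
  define x where "x = V *\<^sub>v b"
  have x: "x \<in> carrier_vec n" using V b by (simp add: x_def)
  have Vtx: "transpose_mat V *\<^sub>v x = b" unfolding x_def using V b VV
    by (simp flip: assoc_mult_mat_vec[of _ n n _ n])
  have x0: "x \<noteq> 0\<^sub>v n"
  proof
    assume "x = 0\<^sub>v n"
    hence "b = transpose_mat V *\<^sub>v 0\<^sub>v n" using Vtx by simp
    also have "\<dots> = 0\<^sub>v n" using V by (intro eq_vecI) (auto simp: mult_mat_vec_def)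
    finally show False using b0 by simp
  qed
  have xx: "x \<bullet> x > 0" using self_scalar_nonneg[of x] self_scalar_zero[OF x] x0 by linarith
  define c where "c = transpose_mat U *\<^sub>v x"
  have cz: "c $ l = 0" if l: "l < i" for l
  proof -
    have ln: "l < n" using l i by simp
    have cl: "col U l \<in> carrier_vec n" using U ln by simp
    have "c $ l = col U l \<bullet> x" unfolding c_def using U ln x by simp
    also have "\<dots> = (\<Sum>m\<in>{0..<n}. (col U l \<bullet> col V m) * b $ m)"
      unfolding x_def by (rule scalar_vec_expand[OF V cl b])
    also have "\<dots> = (\<Sum>m\<in>{0..<n}. E $$ (l, m) * b $ m)"
      by (rule sum.cong) (use l i bz in \<open>auto simp: E_def\<close>)
    also have "\<dots> = 0" by (rule Ebl[OF ln])
    finally show ?thesis .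
  qed
  have "ls ! i * (x \<bullet> x) = (\<Sum>l\<in>{0..<n}. ls ! i * c $ l ^ 2)"
    unfolding quad_spec(2)[OF spF x] c_def by (simp add: sum_distrib_left)
  also have "\<dots> \<le> (\<Sum>l\<in>{0..<n}. ls ! l * c $ l ^ 2)"
  proof (rule sum_mono)
    fix l assume "l \<in> {0..<n}"
    hence l: "l < n" by simp
    show "ls ! i * c $ l ^ 2 \<le> ls ! l * c $ l ^ 2"
    proof (cases "l < i")
      case True then show ?thesis using cz by simp
    next
      case False
      hence "ls ! i \<le> ls ! l" using sorted_nth_mono[OF sls, of i l] l lls by simp
      then show ?thesis by (simp add: mult_right_mono)
    qed
  qed
  also have "\<dots> = x \<bullet> (F *\<^sub>v x)" unfolding quad_spec(1)[OF spF x] c_def ..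
  also have "\<dots> \<le> x \<bullet> (G *\<^sub>v x)" by (rule le[OF x])
  also have "\<dots> = (\<Sum>m\<in>{0..<n}. ms ! m * b $ m ^ 2)" unfolding quad_spec(1)[OF spG x] Vtx ..
  also have "\<dots> \<le> (\<Sum>m\<in>{0..<n}. ms ! i * b $ m ^ 2)"
  proof (rule sum_mono)
    fix m assume "m \<in> {0..<n}"
    hence m: "m < n" by simp
    show "ms ! m * b $ m ^ 2 \<le> ms ! i * b $ m ^ 2"
    proof (cases "i < m")
      case True then show ?thesis using bz m by simp
    next
      case False
      hence "ms ! m \<le> ms ! i" using sorted_nth_mono[OF sms, of m i] i lms by simp
      then show ?thesis by (simp add: mult_right_mono)
    qed
  qed
  also have "\<dots> = ms ! i * (x \<bullet> x)"
    unfolding quad_spec(2)[OF spG x] Vtx by (simp add: sum_distrib_left)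
  finally have "ls ! i * (x \<bullet> x) \<le> ms ! i * (x \<bullet> x)" .
  hence "ls ! i \<le> ms ! i" using xx by simp
  thus ?thesis using e1 e2 by simp
qed


definition rp :: "real mat \<Rightarrow> real list \<Rightarrow> real \<Rightarrow> real mat" where
  "rp U ls a = U * diagm (map (\<lambda>l. l powr a) ls) * transpose_mat U"

lemma repr_col: fixes U :: "real mat"
  assumes U: "U \<in> carrier_mat n n" and UU: "transpose_mat U * U = 1\<^sub>m n" and l: "length ds = n" and i: "i < n"
  shows "(U * diagm ds * transpose_mat U) *\<^sub>v col U i = (ds ! i) \<cdot>\<^sub>v col U i"
proof -
  have Ut: "transpose_mat U \<in> carrier_mat n n" using U by simp
  have D: "diagm ds \<in> carrier_mat n n" using l by auto
  have cu: "col U i \<in> carrier_vec n" using U i by simp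
  have "transpose_mat U *\<^sub>v col U i = col (transpose_mat U * U) i" using col_mult2[OF Ut U i] by simp
  also have "\<dots> = unit_vec n i" unfolding UU using i by simp
  finally have e: "transpose_mat U *\<^sub>v col U i = unit_vec n i" .
  have de: "diagm ds *\<^sub>v unit_vec n i = ds ! i \<cdot>\<^sub>v unit_vec n i"
    using diagm_mult_vec[of "unit_vec n i" ds] l i by (intro eq_vecI) auto
  have "(U * diagm ds * transpose_mat U) *\<^sub>v col U i = U *\<^sub>v (diagm ds *\<^sub>v (transpose_mat U *\<^sub>v col U i))"
    using U D Ut cu by (simp add: assoc_mult_mat_vec[of _ n n _ n])
  also have "\<dots> = U *\<^sub>v (ds ! i \<cdot>\<^sub>v unit_vec n i)" unfolding e de ..
  also have "\<dots> = ds ! i \<cdot>\<^sub>v (U *\<^sub>v unit_vec n i)" using mult_mat_vec[OF U] by simp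
  also have "U *\<^sub>v unit_vec n i = col U i" by (rule mult_unit_vec_col[OF U i])
  finally show ?thesis .
qed

lemma mat_rpow_spec: assumes sp: "spec M n U ls"
  shows "mat_rpow M a = rp U ls a"
proof -
  from sp have M: "M \<in> carrier_mat n n" and U: "U \<in> carrier_mat n n" and UU: "transpose_mat U * U = 1\<^sub>m n"
    and l: "length ls = n" and D: "transpose_mat U * M * U = diagm ls" unfolding spec_def by auto
  have Ut: "transpose_mat U \<in> carrier_mat n n" using U by simp
  have UU': "U * transpose_mat U = 1\<^sub>m n" by (rule orth_right[OF U UU])
  define ps where "ps = map (\<lambda>l. l powr a) ls"
  have lps: "length ps = n" using l by (simp add: ps_def)
  have Dp: "diagm ps \<in> carrier_mat n n" using lps by auto
  define X where "X = rp U ls a"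
  have X: "X \<in> carrier_mat n n" unfolding X_def rp_def using U Dp by (simp add: ps_def)
  have dM: "dim_row M = n" using M by simp
  have colM: "M *\<^sub>v col U i = ls ! i \<cdot>\<^sub>v col U i" if "i < n" for i
    using repr_col[OF U UU l that] spec_repr[OF sp] by simp
  have colX: "X *\<^sub>v col U i = ps ! i \<cdot>\<^sub>v col U i" if "i < n" for i
    using repr_col[OF U UU lps that] unfolding X_def rp_def ps_def by simp
  have ev_col: "eigenvector M (col U i) (ls ! i)" if i: "i < n" for i
  proof -
    have "transpose_mat U *\<^sub>v col U i = col (transpose_mat U * U) i" using col_mult2[OF Ut U i] by simp
    also have "\<dots> = unit_vec n i" unfolding UU using i by simp
    finally have e: "transpose_mat U *\<^sub>v col U i = unit_vec n i" .
    have "col U i \<noteq> 0\<^sub>v n"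
    proof
      assume "col U i = 0\<^sub>v n"
      hence "unit_vec n i = transpose_mat U *\<^sub>v 0\<^sub>v n" using e by simp
      also have "\<dots> = 0\<^sub>v n" using U by (intro eq_vecI) (auto simp: mult_mat_vec_def)
      finally have "unit_vec n i $ i = (0\<^sub>v n :: real vec) $ i" by simp
      thus False using i by simp
    qed
    thus ?thesis unfolding eigenvector_def using colM[OF i] U i dM by auto
  qed
  have propX: "X *\<^sub>v v = mu powr a \<cdot>\<^sub>v v" if ev: "eigenvector M v mu" for v mu
  proof -
    from ev have v: "v \<in> carrier_vec n" and Mv: "M *\<^sub>v v = mu \<cdot>\<^sub>v v" unfolding eigenvector_def dM by auto
    define c where "c = transpose_mat U *\<^sub>v v"
    have c: "c \<in> carrier_vec n" using Ut v by (simp add: c_def)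
    have "diagm ls *\<^sub>v c = transpose_mat U *\<^sub>v (M *\<^sub>v ((U * transpose_mat U) *\<^sub>v v))"
      unfolding D[symmetric] c_def using U Ut M v by (simp add: assoc_mult_mat_vec[of _ n n _ n])
    also have "\<dots> = mu \<cdot>\<^sub>v c" unfolding UU' c_def using v Mv mult_mat_vec[OF Ut v] by simp
    finally have Dc: "diagm ls *\<^sub>v c = mu \<cdot>\<^sub>v c" .
    have comp: "ls ! i * c $ i = mu * c $ i" if "i < n" for i
      using arg_cong[OF Dc, of "\<lambda>w. w $ i"] diagm_mult_vec[of c ls] c l that by simp
    have Dpc: "diagm ps *\<^sub>v c = mu powr a \<cdot>\<^sub>v c"
    proof (rule eq_vecI)
      fix i assume "i < dim_vec (mu powr a \<cdot>\<^sub>v c)"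
      hence i: "i < n" using c by simp
      have "ps ! i * c $ i = mu powr a * c $ i"
      proof (cases "c $ i = 0")
        case False
        hence "ls ! i = mu" using comp[OF i] by simp
        thus ?thesis using i l by (simp add: ps_def)
      qed simp
      thus "(diagm ps *\<^sub>v c) $ i = (mu powr a \<cdot>\<^sub>v c) $ i"
        using diagm_mult_vec[of c ps] c lps i by simp
    qed (use c lps in auto)
    have "X *\<^sub>v v = U *\<^sub>v (diagm ps *\<^sub>v c)"
      unfolding X_def rp_def c_def ps_def[symmetric] using U Dp Ut v by (simp add: assoc_mult_mat_vec[of _ n n _ n])
    also have "\<dots> = mu powr a \<cdot>\<^sub>v (U *\<^sub>v c)" unfolding Dpc using mult_mat_vec[OF U c] by simp
    also have "U *\<^sub>v c = v" unfolding c_def using U Ut v UU' by (simp flip: assoc_mult_mat_vec[of _ n n _ n])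
    finally show ?thesis .
  qed
  have uniq: "Y = X" if Y: "Y \<in> carrier_mat n n" and Yp: "\<forall>v mu. eigenvector M v mu \<longrightarrow> Y *\<^sub>v v = mu powr a \<cdot>\<^sub>v v" for Y
  proof -
    have "Y * U = X * U"
    proof (rule mat_col_eqI)
      fix i assume "i < dim_col (X * U)"
      hence i: "i < n" using X U by simp
      have "col (Y * U) i = Y *\<^sub>v col U i" by (rule col_mult2[OF Y U i])
      also have "\<dots> = ls ! i powr a \<cdot>\<^sub>v col U i" using Yp ev_col[OF i] by blast
      also have "\<dots> = X *\<^sub>v col U i" using colX[OF i] i l by (simp add: ps_def)
      also have "\<dots> = col (X * U) i" by (rule col_mult2[OF X U i, symmetric])
      finally show "col (Y * U) i = col (X * U) i" .
    qed (use X Y U in auto)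
    hence "Y * U * transpose_mat U = X * U * transpose_mat U" by simp
    thus ?thesis using Y X U Ut UU' by (simp add: assoc_mult_mat[of _ n n _ n _ n])
  qed
  have "mat_rpow M a = X" unfolding mat_rpow_def dM
  proof (rule the_equality)
    show "X \<in> carrier_mat n n \<and> (\<forall>v mu. eigenvector M v mu \<longrightarrow> X *\<^sub>v v = mu powr a \<cdot>\<^sub>v v)"
      using X propX by blast
  next
    fix Y assume "Y \<in> carrier_mat n n \<and> (\<forall>v mu. eigenvector M v mu \<longrightarrow> Y *\<^sub>v v = mu powr a \<cdot>\<^sub>v v)"
    thus "Y = X" using uniq by blast
  qed
  thus ?thesis unfolding X_def .
qed


lemma col_norm1: fixes U :: "real mat"
  assumes U: "U \<in> carrier_mat n n" and UU: "transpose_mat U * U = 1\<^sub>m n" and i: "i < n"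
  shows "col U i \<bullet> col U i = 1"
proof -
  have "(transpose_mat U * U) $$ (i, i) = col U i \<bullet> col U i" using U i by simp
  thus ?thesis using UU i by simp
qed

lemma spd_spec: assumes "spd n M"
  shows "\<exists>U ls. spec M n U ls \<and> (\<forall>l\<in>set ls. l > 0)"
proof -
  from assms have M: "M \<in> carrier_mat n n" and sym: "transpose_mat M = M"
    and pos: "\<And>v. v \<in> carrier_vec n \<Longrightarrow> v \<noteq> 0\<^sub>v n \<Longrightarrow> v \<bullet> (M *\<^sub>v v) > 0" unfolding spd_def by auto
  obtain U ls where sp: "spec M n U ls" using spec_exists[OF M sym] by auto
  from sp have U: "U \<in> carrier_mat n n" and UU: "transpose_mat U * U = 1\<^sub>m n" and l: "length ls = n"
    unfolding spec_def by auto
  have "ls ! i > 0" if i: "i < n" for i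
  proof -
    have cu: "col U i \<in> carrier_vec n" using U i by simp
    have n1: "col U i \<bullet> col U i = 1" by (rule col_norm1[OF U UU i])
    have "col U i \<noteq> 0\<^sub>v n" using n1 cu by auto
    hence "col U i \<bullet> (M *\<^sub>v col U i) > 0" using pos cu by auto
    also have "M *\<^sub>v col U i = ls ! i \<cdot>\<^sub>v col U i"
      using repr_col[OF U UU l i] spec_repr[OF sp] by simp
    finally show ?thesis using n1 cu by simp
  qed
  hence "\<forall>l\<in>set ls. l > 0" using l by (auto simp: in_set_conv_nth)
  thus ?thesis using sp by blast
qed

lemma rpow_props: assumes spdM: "spd n M"
  shows "mat_rpow M a \<in> carrier_mat n n"
    "spd n (mat_rpow M a)"
    "mat_rpow M a * mat_rpow M b = mat_rpow M (a + b)"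
    "mat_rpow M 1 = M"
    "mat_rpow M 0 = 1\<^sub>m n"
proof -
  obtain U ls where sp: "spec M n U ls" and pos: "\<forall>l\<in>set ls. l > 0" using spd_spec[OF spdM] by auto
  from sp have M: "M \<in> carrier_mat n n" and U: "U \<in> carrier_mat n n" and UU: "transpose_mat U * U = 1\<^sub>m n"
    and l: "length ls = n" unfolding spec_def by auto
  have Ut: "transpose_mat U \<in> carrier_mat n n" using U by simp
  have UU': "U * transpose_mat U = 1\<^sub>m n" by (rule orth_right[OF U UU])
  have rpw: "mat_rpow M c = rp U ls c" for c by (rule mat_rpow_spec[OF sp])
  have sprp: "spec (rp U ls c) n U (map (\<lambda>l. l powr c) ls)" for c
    unfolding rp_def by (rule spec_of_repr[OF U UU]) (simp add: l)
  show car: "mat_rpow M a \<in> carrier_mat n n" using spec_carrier[OF sprp] rpw by simp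
  show "spd n (mat_rpow M a)" unfolding spd_def
  proof (intro conjI ballI impI)
    show "mat_rpow M a \<in> carrier_mat n n" by (rule car)
    show "transpose_mat (mat_rpow M a) = mat_rpow M a" unfolding rpw by (rule spec_sym[OF sprp])
    fix x :: "real vec" assume x: "x \<in> carrier_vec n" and x0: "x \<noteq> 0\<^sub>v n"
    define c where "c = transpose_mat U *\<^sub>v x"
    have c: "c \<in> carrier_vec n" using Ut x by (simp add: c_def)
    have "x = U *\<^sub>v c" unfolding c_def using U Ut x UU' by (simp flip: assoc_mult_mat_vec[of _ n n _ n])
    hence "c \<noteq> 0\<^sub>v n" using x0 U by (auto intro!: eq_vecI simp: mult_mat_vec_def scalar_prod_def)
    hence "\<exists>i<n. c $ i \<noteq> 0"
    proof (rule contrapos_np)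
      assume "\<not> (\<exists>i<n. c $ i \<noteq> 0)"
      thus "c = 0\<^sub>v n" using c by (intro eq_vecI) auto
    qed
    then obtain i where i: "i < n" and ci: "c $ i \<noteq> 0" by auto
    have nn: "\<forall>l\<in>{0..<n}. 0 \<le> map (\<lambda>l. l powr a) ls ! l * c $ l ^ 2" using l by auto
    have "0 < map (\<lambda>l. l powr a) ls ! i * c $ i ^ 2"
    proof -
      have "ls ! i > 0" using i l pos by (simp add: nth_mem)
      hence "ls ! i powr a > 0" by simp
      moreover have "c $ i ^ 2 > 0" using ci by simp
      ultimately show ?thesis using i l by simp
    qed
    also have "\<dots> \<le> (\<Sum>l\<in>{0..<n}. map (\<lambda>l. l powr a) ls ! l * c $ l ^ 2)"
      by (rule member_le_sum) (use i nn in auto)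
    also have "\<dots> = x \<bullet> (mat_rpow M a *\<^sub>v x)" unfolding rpw quad_spec(1)[OF sprp x] c_def ..
    finally show "x \<bullet> (mat_rpow M a *\<^sub>v x) > 0" .
  qed
  show "mat_rpow M a * mat_rpow M b = mat_rpow M (a + b)"
  proof -
    have Da: "diagm (map (\<lambda>l. l powr a) ls) \<in> carrier_mat n n" using l by auto
    have Db: "diagm (map (\<lambda>l. l powr b) ls) \<in> carrier_mat n n" using l by auto
    have mm: "map2 (*) (map (\<lambda>l. l powr a) ls) (map (\<lambda>l. l powr b) ls) = map (\<lambda>l. l powr (a + b)) ls"
      by (rule nth_equalityI) (auto simp: powr_add)
    have "rp U ls a * rp U ls b = U * (diagm (map (\<lambda>l. l powr a) ls) * diagm (map (\<lambda>l. l powr b) ls)) * transpose_mat U"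
    proof -
      have "rp U ls a * rp U ls b = U * (diagm (map (\<lambda>l. l powr a) ls) * ((transpose_mat U * U) * (diagm (map (\<lambda>l. l powr b) ls) * transpose_mat U)))"
        unfolding rp_def using U Ut Da Db by (simp add: assoc_mult_mat[of _ n n _ n _ n])
      also have "\<dots> = U * (diagm (map (\<lambda>l. l powr a) ls) * diagm (map (\<lambda>l. l powr b) ls)) * transpose_mat U"
        unfolding UU using U Ut Da Db l by (simp add: assoc_mult_mat[of _ n n _ n _ n])
      finally show ?thesis .
    qed
    also have "\<dots> = rp U ls (a + b)" unfolding rp_def by (subst diagm_mult) (auto simp: mm)
    finally show ?thesis unfolding rpw .
  qed
  show "mat_rpow M 1 = M"
  proof -
    have "map (\<lambda>l. l powr 1) ls = ls" using pos by (intro map_idI) (auto simp: powr_one)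
    thus ?thesis unfolding rpw rp_def using spec_repr[OF sp] by simp
  qed
  show "mat_rpow M 0 = 1\<^sub>m n"
  proof -
    have "diagm (map (\<lambda>l. l powr 0) ls) = 1\<^sub>m n"
      by (rule eq_matI) (use pos l in \<open>auto dest!: nth_mem\<close>)
    thus ?thesis unfolding rpw rp_def using U UU' by simp
  qed
qed

lemma compress_spd: fixes X \<iota> :: "real mat"
  assumes X: "spd n X" and io: "isometric_embedding k n \<iota>"
  shows "spd k (transpose_mat \<iota> * X * \<iota>)"
proof -
  from X have Xc: "X \<in> carrier_mat n n" and sym: "transpose_mat X = X"
    and pos: "\<And>v. v \<in> carrier_vec n \<Longrightarrow> v \<noteq> 0\<^sub>v n \<Longrightarrow> v \<bullet> (X *\<^sub>v v) > 0" unfolding spd_def by auto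
  from io have i: "\<iota> \<in> carrier_mat n k" and ii: "transpose_mat \<iota> * \<iota> = 1\<^sub>m k"
    unfolding isometric_embedding_def by auto
  have it: "transpose_mat \<iota> \<in> carrier_mat k n" using i by simp
  show ?thesis unfolding spd_def
  proof (intro conjI ballI impI)
    show "transpose_mat \<iota> * X * \<iota> \<in> carrier_mat k k" using i Xc by auto
    have "transpose_mat (transpose_mat \<iota> * X * \<iota>) = transpose_mat \<iota> * transpose_mat (transpose_mat \<iota> * X)"
      by (rule transpose_mult[of _ k n]) (use i Xc in auto)
    also have "transpose_mat (transpose_mat \<iota> * X) = transpose_mat X * \<iota>"
      using transpose_mult[of "transpose_mat \<iota>" k n X n] i Xc by simp
    finally show "transpose_mat (transpose_mat \<iota> * X * \<iota>) = transpose_mat \<iota> * X * \<iota>"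
      unfolding sym using i Xc it by (simp add: assoc_mult_mat[of _ k n _ n _ k])
    fix x :: "real vec" assume x: "x \<in> carrier_vec k" and x0: "x \<noteq> 0\<^sub>v k"
    define y where "y = \<iota> *\<^sub>v x"
    have y: "y \<in> carrier_vec n" using i x by (simp add: y_def)
    have "transpose_mat \<iota> *\<^sub>v y = x" unfolding y_def using i it x ii by (simp flip: assoc_mult_mat_vec[of _ k n _ k])
    hence y0: "y \<noteq> 0\<^sub>v n" using x0 it by (auto intro!: eq_vecI simp: mult_mat_vec_def scalar_prod_def)
    have "x \<bullet> ((transpose_mat \<iota> * X * \<iota>) *\<^sub>v x) = x \<bullet> (transpose_mat \<iota> *\<^sub>v (X *\<^sub>v y))"
      unfolding y_def using i it Xc x by (simp add: assoc_mult_mat_vec[of _ k n _ k] assoc_mult_mat_vec[of _ n n _ k])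
    also have "\<dots> = y \<bullet> (X *\<^sub>v y)"
    proof -
      have "(\<iota> *\<^sub>v x) \<bullet> (X *\<^sub>v y) = x \<bullet> (transpose_mat \<iota> *\<^sub>v (X *\<^sub>v y))"
        by (rule scalar_mat_transpose[OF i x]) (use Xc y in auto)
      thus ?thesis unfolding y_def by simp
    qed
    finally show "x \<bullet> ((transpose_mat \<iota> * X * \<iota>) *\<^sub>v x) > 0" using pos[OF y y0] by simp
  qed
qed

lemma proj_le: fixes \<iota> :: "real mat"
  assumes i: "\<iota> \<in> carrier_mat n k" and ii: "transpose_mat \<iota> * \<iota> = 1\<^sub>m k" and z: "z \<in> carrier_vec n"
  shows "(transpose_mat \<iota> *\<^sub>v z) \<bullet> (transpose_mat \<iota> *\<^sub>v z) \<le> z \<bullet> z"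
proof -
  have it: "transpose_mat \<iota> \<in> carrier_mat k n" using i by simp
  define w where "w = transpose_mat \<iota> *\<^sub>v z"
  have w: "w \<in> carrier_vec k" using it z by (simp add: w_def)
  have iw: "\<iota> *\<^sub>v w \<in> carrier_vec n" using i w by simp
  have a: "z \<bullet> (\<iota> *\<^sub>v w) = w \<bullet> w"
  proof -
    have "(\<iota> *\<^sub>v w) \<bullet> z = w \<bullet> (transpose_mat \<iota> *\<^sub>v z)" by (rule scalar_mat_transpose[OF i w z])
    thus ?thesis using comm_scalar_prod[OF z iw] by (simp add: w_def)
  qed
  have b: "(\<iota> *\<^sub>v w) \<bullet> (\<iota> *\<^sub>v w) = w \<bullet> w"
  proof -
    have "(\<iota> *\<^sub>v w) \<bullet> (\<iota> *\<^sub>v w) = w \<bullet> (transpose_mat \<iota> *\<^sub>v (\<iota> *\<^sub>v w))" by (rule scalar_mat_transpose[OF i w iw])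
    also have "transpose_mat \<iota> *\<^sub>v (\<iota> *\<^sub>v w) = w" using i it w ii by (simp flip: assoc_mult_mat_vec[of _ k n _ k])
    finally show ?thesis .
  qed
  have "0 \<le> (z - \<iota> *\<^sub>v w) \<bullet> (z - \<iota> *\<^sub>v w)" by (rule self_scalar_nonneg)
  also have "\<dots> = z \<bullet> z - z \<bullet> (\<iota> *\<^sub>v w) - ((\<iota> *\<^sub>v w) \<bullet> z - (\<iota> *\<^sub>v w) \<bullet> (\<iota> *\<^sub>v w))"
    using z iw by (simp add: minus_scalar_prod_distrib[of _ n] scalar_prod_minus_distrib[of _ n])
  also have "\<dots> = z \<bullet> z - w \<bullet> w" using a b comm_scalar_prod[OF z iw] by simp
  finally show ?thesis unfolding w_def by simp
qed


lemma cp_swap: fixes X Y Xi :: "real mat"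
  assumes X: "X \<in> carrier_mat k k" and Y: "Y \<in> carrier_mat k k" and Xi: "Xi \<in> carrier_mat k k"
    and XXi: "X * Xi = 1\<^sub>m k" and XiX: "Xi * X = 1\<^sub>m k"
  shows "char_poly (X * Y) = char_poly (Y * X)"
proof (rule char_poly_similar, rule similar_matI[of _ _ X Xi k])
  have "X * (Y * X) * Xi = X * Y * (X * Xi)" using X Y Xi by (simp add: assoc_mult_mat[of _ k k _ k _ k])
  thus "X * Y = X * (Y * X) * Xi" unfolding XXi using X Y by simp
qed (use X Y Xi XXi XiX in auto)

lemma sym_TT: fixes Z :: "real mat" assumes "Z \<in> carrier_mat m k"
  shows "transpose_mat (transpose_mat Z * Z) = transpose_mat Z * Z"
  using transpose_mult[of "transpose_mat Z" k m Z k] assms by simp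

lemma quad_TT: fixes Z :: "real mat" assumes Z: "Z \<in> carrier_mat m k" and x: "x \<in> carrier_vec k"
  shows "x \<bullet> ((transpose_mat Z * Z) *\<^sub>v x) = (Z *\<^sub>v x) \<bullet> (Z *\<^sub>v x)"
proof -
  have "(Z *\<^sub>v x) \<bullet> (Z *\<^sub>v x) = x \<bullet> (transpose_mat Z *\<^sub>v (Z *\<^sub>v x))"
    by (rule scalar_mat_transpose[OF Z x]) (use Z x in auto)
  thus ?thesis using Z x by (simp add: assoc_mult_mat_vec[of _ k m _ k])
qed

lemma mult_assoc_rule: fixes R A Z :: "real mat"
  assumes "R \<in> carrier_mat k k" "R' \<in> carrier_mat k k" "Z \<in> carrier_mat k k" "R * R' = A"
  shows "R * (R' * Z) = A * Z"
  using assms by (simp flip: assoc_mult_mat[of _ k k _ k _ k])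

theorem lemma3p1:
  fixes k n :: nat and A B \<iota> :: "real mat" and \<alpha> :: real and j :: nat
  assumes "k < n"
    and "spd k A" and "spd n B"
    and "isometric_embedding k n \<iota>"
    and "1 \<le> j" and "j \<le> k"
  shows "eig_asc (compressed_pow \<iota> B (\<alpha>/2) * A * compressed_pow \<iota> B (\<alpha>/2)) j
         \<le> eig_asc (mat_rpow (compressed_pow \<iota> B \<alpha>) (1/2) * A * mat_rpow (compressed_pow \<iota> B \<alpha>) (1/2)) j"
proof -
  note spdA = assms(2) and spdB = assms(3) and io = assms(4)
  from io have i: "\<iota> \<in> carrier_mat n k" and ii: "transpose_mat \<iota> * \<iota> = 1\<^sub>m k"
    unfolding isometric_embedding_def by auto
  have it: "transpose_mat \<iota> \<in> carrier_mat k n" using i by simp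
  have Ac: "A \<in> carrier_mat k k" using spdA unfolding spd_def by auto
  define P where "P = mat_rpow B (\<alpha>/2)"
  have Pc: "P \<in> carrier_mat n n" unfolding P_def by (rule rpow_props(1)[OF spdB])
  have symP: "transpose_mat P = P" using rpow_props(2)[OF spdB, of "\<alpha>/2"] unfolding P_def spd_def by auto
  have PP: "P * P = mat_rpow B \<alpha>" unfolding P_def rpow_props(3)[OF spdB] by simp
  define C where "C = compressed_pow \<iota> B (\<alpha>/2)"
  define D where "D = compressed_pow \<iota> B \<alpha>"
  have Cdef: "C = transpose_mat \<iota> * P * \<iota>" unfolding C_def P_def compressed_pow_def ..
  have Ddef: "D = transpose_mat \<iota> * (P * P) * \<iota>" unfolding D_def PP compressed_pow_def ..
  have spdC: "spd k C" unfolding C_def compressed_pow_def by (rule compress_spd[OF rpow_props(2)[OF spdB] io])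
  have spdD: "spd k D" unfolding D_def compressed_pow_def by (rule compress_spd[OF rpow_props(2)[OF spdB] io])
  have Cc: "C \<in> carrier_mat k k" and Dc: "D \<in> carrier_mat k k" using spdC spdD unfolding spd_def by auto
  have symC: "transpose_mat C = C" using spdC unfolding spd_def by auto
  define R where "R = mat_rpow A (1/2)"
  define Ri where "Ri = mat_rpow A (-1/2)"
  have Rc: "R \<in> carrier_mat k k" unfolding R_def by (rule rpow_props(1)[OF spdA])
  have Ric: "Ri \<in> carrier_mat k k" unfolding Ri_def by (rule rpow_props(1)[OF spdA])
  have symR: "transpose_mat R = R" using rpow_props(2)[OF spdA, of "1/2"] unfolding R_def spd_def by auto
  have RR: "R * R = A" unfolding R_def rpow_props(3)[OF spdA] using rpow_props(4)[OF spdA] by simp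
  have RRi: "R * Ri = 1\<^sub>m k" unfolding R_def Ri_def rpow_props(3)[OF spdA] using rpow_props(5)[OF spdA] by simp
  have RiR: "Ri * R = 1\<^sub>m k" unfolding R_def Ri_def rpow_props(3)[OF spdA] using rpow_props(5)[OF spdA] by simp
  define Ci where "Ci = mat_rpow C (-1)"
  have Cic: "Ci \<in> carrier_mat k k" unfolding Ci_def by (rule rpow_props(1)[OF spdC])
  have CCi: "C * Ci = 1\<^sub>m k"
    using rpow_props(3)[OF spdC, of 1 "-1"] rpow_props(4,5)[OF spdC] unfolding Ci_def by simp
  have CiC: "Ci * C = 1\<^sub>m k"
    using rpow_props(3)[OF spdC, of "-1" 1] rpow_props(4,5)[OF spdC] unfolding Ci_def by simp
  define S where "S = mat_rpow D (1/2)"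
  define Si where "Si = mat_rpow D (-1/2)"
  have Sc: "S \<in> carrier_mat k k" unfolding S_def by (rule rpow_props(1)[OF spdD])
  have Sic: "Si \<in> carrier_mat k k" unfolding Si_def by (rule rpow_props(1)[OF spdD])
  have symS: "transpose_mat S = S" using rpow_props(2)[OF spdD, of "1/2"] unfolding S_def spd_def by auto
  have SS: "S * S = D" unfolding S_def rpow_props(3)[OF spdD] using rpow_props(4)[OF spdD] by simp
  have SSi: "S * Si = 1\<^sub>m k" unfolding S_def Si_def rpow_props(3)[OF spdD] using rpow_props(5)[OF spdD] by simp
  have SiS: "Si * S = 1\<^sub>m k" unfolding S_def Si_def rpow_props(3)[OF spdD] using rpow_props(5)[OF spdD] by simp
  define Z1 where "Z1 = C * R"
  define Z2 where "Z2 = S * R"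
  have Z1: "Z1 \<in> carrier_mat k k" and Z2: "Z2 \<in> carrier_mat k k" using Cc Sc Rc by (auto simp: Z1_def Z2_def)
  have tZ1: "transpose_mat Z1 = R * C" unfolding Z1_def using transpose_mult[OF Cc Rc] symC symR by simp
  have tZ2: "transpose_mat Z2 = R * S" unfolding Z2_def using transpose_mult[OF Sc Rc] symS symR by simp
  have cp1: "char_poly (C * A * C) = char_poly (transpose_mat Z1 * Z1)"
  proof -
    have "char_poly (Z1 * transpose_mat Z1) = char_poly (transpose_mat Z1 * Z1)"
    proof (rule cp_swap[OF Z1 _ _ _ _])
      show "transpose_mat Z1 \<in> carrier_mat k k" using Z1 by simp
      show "Ri * Ci \<in> carrier_mat k k" using Ric Cic by simp
      show "Z1 * (Ri * Ci) = 1\<^sub>m k" unfolding Z1_def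
        using mult_assoc_rule[OF Rc Ric Cic RRi] Cc Rc Ric Cic CCi by (simp add: assoc_mult_mat[of _ k k _ k _ k])
      show "Ri * Ci * Z1 = 1\<^sub>m k" unfolding Z1_def
        using mult_assoc_rule[OF Cic Cc Rc CiC] Cc Rc Ric Cic RiR by (simp add: assoc_mult_mat[of _ k k _ k _ k])
    qed
    moreover have "Z1 * transpose_mat Z1 = C * A * C" unfolding tZ1 unfolding Z1_def
      using mult_assoc_rule[OF Rc Rc Cc RR] Cc Rc Ac by (simp add: assoc_mult_mat[of _ k k _ k _ k])
    ultimately show ?thesis by simp
  qed
  have cp2: "char_poly (S * A * S) = char_poly (transpose_mat Z2 * Z2)"
  proof -
    have "char_poly (Z2 * transpose_mat Z2) = char_poly (transpose_mat Z2 * Z2)"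
    proof (rule cp_swap[OF Z2 _ _ _ _])
      show "transpose_mat Z2 \<in> carrier_mat k k" using Z2 by simp
      show "Ri * Si \<in> carrier_mat k k" using Ric Sic by simp
      show "Z2 * (Ri * Si) = 1\<^sub>m k" unfolding Z2_def
        using mult_assoc_rule[OF Rc Ric Sic RRi] Sc Rc Ric Sic SSi by (simp add: assoc_mult_mat[of _ k k _ k _ k])
      show "Ri * Si * Z2 = 1\<^sub>m k" unfolding Z2_def
        using mult_assoc_rule[OF Sic Sc Rc SiS] Sc Rc Ric Sic RiR by (simp add: assoc_mult_mat[of _ k k _ k _ k])
    qed
    moreover have "Z2 * transpose_mat Z2 = S * A * S" unfolding tZ2 unfolding Z2_def
      using mult_assoc_rule[OF Rc Rc Sc RR] Sc Rc Ac by (simp add: assoc_mult_mat[of _ k k _ k _ k])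
    ultimately show ?thesis by simp
  qed
  have le: "x \<bullet> ((transpose_mat Z1 * Z1) *\<^sub>v x) \<le> x \<bullet> ((transpose_mat Z2 * Z2) *\<^sub>v x)"
    if x: "x \<in> carrier_vec k" for x
  proof -
    define y where "y = R *\<^sub>v x"
    have y: "y \<in> carrier_vec k" using Rc x by (simp add: y_def)
    define z where "z = P *\<^sub>v (\<iota> *\<^sub>v y)"
    have z: "z \<in> carrier_vec n" using Pc i y by (simp add: z_def)
    have iy: "\<iota> *\<^sub>v y \<in> carrier_vec n" using i y by simp
    have "Z1 *\<^sub>v x = transpose_mat \<iota> *\<^sub>v z" unfolding Z1_def Cdef z_def y_def
      using it Pc i Rc x by (simp add: assoc_mult_mat_vec[of _ k k _ k] assoc_mult_mat_vec[of _ k n _ k]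
          assoc_mult_mat_vec[of _ n n _ k])
    hence "(Z1 *\<^sub>v x) \<bullet> (Z1 *\<^sub>v x) \<le> z \<bullet> z" using proj_le[OF i ii z] by simp
    also have "z \<bullet> z = (\<iota> *\<^sub>v y) \<bullet> (P *\<^sub>v z)"
    proof -
      have "(P *\<^sub>v (\<iota> *\<^sub>v y)) \<bullet> z = (\<iota> *\<^sub>v y) \<bullet> (transpose_mat P *\<^sub>v z)"
        by (rule scalar_mat_transpose[OF Pc iy z])
      thus ?thesis unfolding symP z_def by simp
    qed
    also have "\<dots> = y \<bullet> (transpose_mat \<iota> *\<^sub>v (P *\<^sub>v z))"
      by (rule scalar_mat_transpose[OF i y]) (use Pc z in auto)
    also have "transpose_mat \<iota> *\<^sub>v (P *\<^sub>v z) = D *\<^sub>v y" unfolding Ddef z_def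
      using it Pc i y by (simp add: assoc_mult_mat_vec[of _ k n _ k] assoc_mult_mat_vec[of _ n n _ k]
        assoc_mult_mat_vec[of _ k n _ n] assoc_mult_mat_vec[of _ n n _ n])
    also have "D *\<^sub>v y = S *\<^sub>v (S *\<^sub>v y)" unfolding SS[symmetric] using Sc y by simp
    also have "y \<bullet> (S *\<^sub>v (S *\<^sub>v y)) = (S *\<^sub>v y) \<bullet> (S *\<^sub>v y)"
    proof -
      have "(S *\<^sub>v y) \<bullet> (S *\<^sub>v y) = y \<bullet> (transpose_mat S *\<^sub>v (S *\<^sub>v y))"
        by (rule scalar_mat_transpose[OF Sc y]) (use Sc y in auto)
      thus ?thesis unfolding symS by simp
    qed
    also have "S *\<^sub>v y = Z2 *\<^sub>v x" unfolding Z2_def y_def using Sc Rc x by simp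
    finally have "(Z1 *\<^sub>v x) \<bullet> (Z1 *\<^sub>v x) \<le> (Z2 *\<^sub>v x) \<bullet> (Z2 *\<^sub>v x)" .
    thus ?thesis using quad_TT[OF Z1 x] quad_TT[OF Z2 x] by simp
  qed
  have "eig_asc (transpose_mat Z1 * Z1) j \<le> eig_asc (transpose_mat Z2 * Z2) j"
    by (rule weyl[OF _ sym_TT[OF Z1] _ sym_TT[OF Z2] le assms(5,6)]) (use Z1 Z2 in auto)
  thus ?thesis unfolding C_def[symmetric] D_def[symmetric] S_def[symmetric]
    using eig_asc_char_poly[OF cp1] eig_asc_char_poly[OF cp2] by simp
qed

end
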